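(* Let $\odot$ be a non-degenerate pseudo-multiplication and let $\tau$ be a $\sigma$-maxitive measure on a $\sigma$-algebra $\mathcal{B}$ on a nonempty set $E$ having the Radon–Nikodym property with respect to the idempotent $\odot$-integral. Then $\tau$ is localizable.
   Context: Write $\overline{\mathbb{R}}_+=[0,\infty]$. A pseudo-multiplication is a binary operation $\odot$ on $\overline{\mathbb{R}}_+$ with the following properties: - it is associative; - it is continuous on $(0,\infty)\times[0,\infty]$; - for every $t$, the map $s\mapsto s\odot t$ is continuous on $(0,\infty]$; - it is nondecreasing in each argument; - it has a left identity $1_\odot$, i.e. $1_\odot\odot t=t$ for all $t$; - it has no zero divisors, i.e. $s\odot t=0$ implies $s=0$ or $t=0$; - $0\odot t=t\odot 0=0$ for all $t$. Put $O(t)=\inf_{s>0}s\odot t$. An element $t$ is $\odot$-finite if $O(t)=0$, and $\odot$-infinite otherwise. The operation $\odot$ is non-degenerate if $1_\odot$ is $\odot$-finite. A $\sigma$-maxitive measure on $\mathcal{B}$ is a map $\nu:\mathcal{B}\to\overline{\mathbb{R}}_+$ with $\nu(\emptyset)=0$ and $\nu(\bigcup_j B_j)=\sup_j\nu(B_j)$ for every countable family. A set is $\tau$-negligible if it is contained in some $B\in\mathcal{B}$ with $\tau(B)=0$. A $\sigma$-ideal of $\mathcal{B}$ is a nonempty subfamily closed under countable unions and under passing to measurable subsets. A map $f:E\to\overline{\mathbb{R}}_+$ is $\mathcal{B}$-measurable if $\{f>t\}\in\mathcal{B}$ for all $t\in[0,\infty)$. The idempotent $\odot$-integral is $\int^\infty_B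 f\odot d\tau=\sup_{t\in[0,\infty)}t\odot\tau(B\cap\{f>t\})$. $\nu\ll_\odot\tau$ means $\nu(B)\le\infty\odot\tau(B)$ for every $B\in\mathcal{B}$ with $\tau(B)$ $\odot$-finite. $\tau$ has the Radon–Nikodym property if every $\sigma$-maxitive $\nu\ll_\odot\tau$ admits a $\mathcal{B}$-measurable $c:E\to\overline{\mathbb{R}}_+$ with $\nu(B)=\int^\infty_B c\odot d\tau$ for all $B\in\mathcal{B}$. $\tau$ is localizable if for every $\sigma$-ideal $\mathcal{I}$ of $\mathcal{B}$ there is $L\in\mathcal{B}$ such that: - $S\setminus L$ is $\tau$-negligible for all $S\in\mathcal{I}$; - whenever $B\in\mathcal{B}$ satisfies that $S\setminus B$ is $\tau$-negligible for all $S\in\mathcal{I}$, the set $L\setminus B$ is $\tau$-negligible. *)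

theory Defs
  imports "HOL-Analysis.Analysis"
begin

text \<open>The extended half-line [0,\<infinity>] is modelled by the type ennreal.
  A pseudo-multiplication is given by the operation op together with a
  chosen left identity e (the element 1 of the paper).\<close>

definition pseudo_mult :: "(ennreal \<Rightarrow> ennreal \<Rightarrow> ennreal) \<Rightarrow> ennreal \<Rightarrow> bool" where
  "pseudo_mult op e \<longleftrightarrow>
     (\<forall>a b c. op (op a b) c = op a (op b c)) \<and>
     continuous_on ({0<..<top} \<times> UNIV) (\<lambda>p. op (fst p) (snd p)) \<and>
     (\<forall>t. continuous_on {0<..} (\<lambda>s. op s t)) \<and>
     (\<forall>s s' t. s \<le> s' \<longrightarrow> op s t \<le> op s' t) \<and>
     (\<forall>s t t'. t \<le> t' \<longrightarrow> op s t \<le> op s t') \<and>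
     (\<forall>t. op e t = t) \<and>
     (\<forall>s t. op s t = 0 \<longrightarrow> s = 0 \<or> t = 0) \<and>
     (\<forall>t. op 0 t = 0 \<and> op t 0 = 0)"

definition O_pm :: "(ennreal \<Rightarrow> ennreal \<Rightarrow> ennreal) \<Rightarrow> ennreal \<Rightarrow> ennreal" where
  "O_pm op t = (INF s\<in>{0<..}. op s t)"

definition pm_finite :: "(ennreal \<Rightarrow> ennreal \<Rightarrow> ennreal) \<Rightarrow> ennreal \<Rightarrow> bool" where
  "pm_finite op t \<longleftrightarrow> O_pm op t = 0"

definition non_degenerate :: "(ennreal \<Rightarrow> ennreal \<Rightarrow> ennreal) \<Rightarrow> ennreal \<Rightarrow> bool" where
  "non_degenerate op e \<longleftrightarrow> pm_finite op e"

definition sigma_maxitive :: "'a set set \<Rightarrow> ('a set \<Rightarrow> ennreal) \<Rightarrow> bool" where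
  "sigma_maxitive B \<nu> \<longleftrightarrow> \<nu> {} = 0 \<and>
     (\<forall>Bs :: nat \<Rightarrow> 'a set. range Bs \<subseteq> B \<longrightarrow> \<nu> (\<Union>j. Bs j) = (SUP j. \<nu> (Bs j)))"

definition negligible_wrt :: "'a set set \<Rightarrow> ('a set \<Rightarrow> ennreal) \<Rightarrow> 'a set \<Rightarrow> bool" where
  "negligible_wrt B \<tau> A \<longleftrightarrow> (\<exists>C\<in>B. A \<subseteq> C \<and> \<tau> C = 0)"

definition sigma_ideal :: "'a set set \<Rightarrow> 'a set set \<Rightarrow> bool" where
  "sigma_ideal B I \<longleftrightarrow> I \<subseteq> B \<and> I \<noteq> {} \<and>
     (\<forall>Ss :: nat \<Rightarrow> 'a set. range Ss \<subseteq> I \<longrightarrow> (\<Union>j. Ss j) \<in> I) \<and>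
     (\<forall>S\<in>I. \<forall>A\<in>B. A \<subseteq> S \<longrightarrow> A \<in> I)"

definition B_measurable :: "'a set \<Rightarrow> 'a set set \<Rightarrow> ('a \<Rightarrow> ennreal) \<Rightarrow> bool" where
  "B_measurable E B f \<longleftrightarrow> (\<forall>t. t < top \<longrightarrow> {x\<in>E. t < f x} \<in> B)"

definition idem_integral ::
  "(ennreal \<Rightarrow> ennreal \<Rightarrow> ennreal) \<Rightarrow> 'a set \<Rightarrow> ('a set \<Rightarrow> ennreal) \<Rightarrow> 'a set \<Rightarrow> ('a \<Rightarrow> ennreal) \<Rightarrow> ennreal" where
  "idem_integral op E \<tau> C f = (SUP t\<in>{0..<top}. op t (\<tau> (C \<inter> {x\<in>E. t < f x})))"

definition pm_abs_cont ::
  "(ennreal \<Rightarrow> ennreal \<Rightarrow> ennreal) \<Rightarrow> 'a set set \<Rightarrow> ('a set \<Rightarrow> ennreal) \<Rightarrow> ('a set \<Rightarrow> ennreal) \<Rightarrow> bool" where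
  "pm_abs_cont op B \<nu> \<tau> \<longleftrightarrow> (\<forall>C\<in>B. pm_finite op (\<tau> C) \<longrightarrow> \<nu> C \<le> op top (\<tau> C))"

definition radon_nikodym_property ::
  "(ennreal \<Rightarrow> ennreal \<Rightarrow> ennreal) \<Rightarrow> 'a set \<Rightarrow> 'a set set \<Rightarrow> ('a set \<Rightarrow> ennreal) \<Rightarrow> bool" where
  "radon_nikodym_property op E B \<tau> \<longleftrightarrow>
     (\<forall>\<nu>. sigma_maxitive B \<nu> \<and> pm_abs_cont op B \<nu> \<tau> \<longrightarrow>
        (\<exists>c. B_measurable E B c \<and> (\<forall>C\<in>B. \<nu> C = idem_integral op E \<tau> C c)))"

definition localizable :: "'a set set \<Rightarrow> ('a set \<Rightarrow> ennreal) \<Rightarrow> bool" where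
  "localizable B \<tau> \<longleftrightarrow>
     (\<forall>I. sigma_ideal B I \<longrightarrow>
        (\<exists>L\<in>B. (\<forall>S\<in>I. negligible_wrt B \<tau> (S - L)) \<and>
               (\<forall>C\<in>B. (\<forall>S\<in>I. negligible_wrt B \<tau> (S - C)) \<longrightarrow> negligible_wrt B \<tau> (L - C))))"

end

theory Submission
  imports Defs
begin

lemma smax_mono:
  assumes "sigma_maxitive B \<tau>" "A \<in> B" "C \<in> B" "A \<subseteq> C"
  shows "\<tau> A \<le> \<tau> C"
proof -
  let ?Bs = "\<lambda>j::nat. if j = 0 then A else C"
  have r: "range ?Bs \<subseteq> B" using assms by auto
  have u: "(\<Union>j. ?Bs j) = C" using assms(4) by (auto split: if_splits)
  have "\<tau> C = (SUP j. \<tau> (?Bs j))" using assms(1) r u unfolding sigma_maxitive_def by metis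
  moreover have "\<tau> A \<le> (SUP j. \<tau> (?Bs j))" by (rule SUP_upper2[of 0]) auto
  ultimately show ?thesis by simp
qed

lemma smax_zero:
  fixes Bs :: "nat \<Rightarrow> 'a set"
  assumes "sigma_maxitive B \<tau>" "range Bs \<subseteq> B" "\<And>j. \<tau> (Bs j) = 0"
  shows "\<tau> (\<Union>j. Bs j) = 0"
proof -
  have "\<tau> (\<Union>j. Bs j) = (SUP j. \<tau> (Bs j))" using assms(1,2) unfolding sigma_maxitive_def by (metis (no_types))
  thus ?thesis using assms(3) by simp
qed

theorem mainTheorem6:
  fixes op :: "ennreal \<Rightarrow> ennreal \<Rightarrow> ennreal" and e :: ennreal
    and E :: "'a set" and B :: "'a set set" and \<tau> :: "'a set \<Rightarrow> ennreal"
  assumes "pseudo_mult op e"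
    and "non_degenerate op e"
    and "E \<noteq> {}"
    and "sigma_algebra E B"
    and "sigma_maxitive B \<tau>"
    and "radon_nikodym_property op E B \<tau>"
  shows "localizable B \<tau>"
  unfolding localizable_def
proof (intro allI impI)
  fix I assume I: "sigma_ideal B I"
  interpret sa: sigma_algebra E B by fact
  have IB: "I \<subseteq> B" and Ine: "I \<noteq> {}" using I unfolding sigma_ideal_def by auto
  have t0: "\<tau> {} = 0" using assms(5) unfolding sigma_maxitive_def by simp
  have mono1: "\<And>s s' t. s \<le> s' \<Longrightarrow> op s t \<le> op s' t"
    and ide: "\<And>t. op e t = t" and nzd: "\<And>s t. op s t = 0 \<Longrightarrow> s = 0 \<or> t = 0"
    and z: "\<And>t. op t 0 = 0"
    using assms(1) unfolding pseudo_mult_def by auto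
  define \<nu> where "\<nu> C = (SUP S\<in>I. \<tau> (C \<inter> S))" for C
  have num: "sigma_maxitive B \<nu>"
    unfolding sigma_maxitive_def
  proof (intro conjI allI impI)
    show "\<nu> {} = 0" unfolding \<nu>_def using t0 Ine by simp
  next
    fix Bs :: "nat \<Rightarrow> 'a set" assume r: "range Bs \<subseteq> B"
    have "\<nu> (\<Union>j. Bs j) = (SUP S\<in>I. \<tau> (\<Union>j. Bs j \<inter> S))"
    proof -
      have "\<And>S. (\<Union>j. Bs j) \<inter> S = (\<Union>j. Bs j \<inter> S)" by blast
      thus ?thesis unfolding \<nu>_def by presburger
    qed
    also have "\<dots> = (SUP S\<in>I. SUP j. \<tau> (Bs j \<inter> S))"
    proof (rule SUP_cong[OF refl])
      fix S assume "S \<in> I"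
      hence "range (\<lambda>j. Bs j \<inter> S) \<subseteq> B" using r IB by auto
      thus "\<tau> (\<Union>j. Bs j \<inter> S) = (SUP j. \<tau> (Bs j \<inter> S))"
        using assms(5) unfolding sigma_maxitive_def by blast
    qed
    also have "\<dots> = (SUP j. SUP S\<in>I. \<tau> (Bs j \<inter> S))" by (rule SUP_commute)
    finally show "\<nu> (\<Union>j. Bs j) = (SUP j. \<nu> (Bs j))" unfolding \<nu>_def .
  qed
  have nule: "\<nu> C \<le> \<tau> C" if "C \<in> B" for C
    unfolding \<nu>_def
  proof (rule SUP_least)
    fix S assume "S \<in> I"
    thus "\<tau> (C \<inter> S) \<le> \<tau> C" using that IB smax_mono[OF assms(5)] by blast
  qed
  have "pm_abs_cont op B \<nu> \<tau>"
    unfolding pm_abs_cont_def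
  proof (intro ballI impI)
    fix C assume "C \<in> B"
    have "\<tau> C = op e (\<tau> C)" by (simp add: ide)
    also have "\<dots> \<le> op top (\<tau> C)" by (rule mono1) simp
    finally show "\<nu> C \<le> op top (\<tau> C)" using nule[OF \<open>C \<in> B\<close>] by simp
  qed
  then obtain c where cm: "B_measurable E B c" and cn: "\<And>C. C \<in> B \<Longrightarrow> \<nu> C = idem_integral op E \<tau> C c"
    using assms(6) num unfolding radon_nikodym_property_def by blast
  have lev: "{x\<in>E. t < c x} \<in> B" if "t < top" for t using cm that unfolding B_measurable_def by blast
  define L where "L = {x\<in>E. 0 < c x}"
  have LB: "L \<in> B" unfolding L_def using lev[of 0] by simp
  show "\<exists>L\<in>B. (\<forall>S\<in>I. negligible_wrt B \<tau> (S - L)) \<and>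
               (\<forall>C\<in>B. (\<forall>S\<in>I. negligible_wrt B \<tau> (S - C)) \<longrightarrow> negligible_wrt B \<tau> (L - C))"
  proof (rule bexI[OF _ LB], intro conjI ballI impI)
    fix S assume S: "S \<in> I"
    hence SB: "S \<in> B" using IB by auto
    have D: "S - L \<in> B" using SB LB by auto
    have "\<nu> (S - L) = 0"
      unfolding cn[OF D] idem_integral_def
    proof (rule antisym[OF SUP_least])
      fix t :: ennreal assume "t \<in> {0..<top}"
      have "(S - L) \<inter> {x\<in>E. t < c x} = {}" unfolding L_def by (auto intro: le_less_trans[OF zero_le])
      thus "op t (\<tau> ((S - L) \<inter> {x\<in>E. t < c x})) \<le> 0" by (simp add: t0 z)
    qed simp
    moreover have "\<tau> (S - L) \<le> \<nu> (S - L)"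
      unfolding \<nu>_def by (rule SUP_upper2[OF S]) (simp add: Int_absorb2[of "S - L" S] Diff_subset)
    ultimately have "\<tau> (S - L) = 0" by simp
    thus "negligible_wrt B \<tau> (S - L)" unfolding negligible_wrt_def using D by blast
  next
    fix C assume CB: "C \<in> B" and neg: "\<forall>S\<in>I. negligible_wrt B \<tau> (S - C)"
    have D: "L - C \<in> B" using CB LB by auto
    have "\<nu> (L - C) = 0"
      unfolding \<nu>_def
    proof (rule antisym[OF SUP_least])
      fix S assume S: "S \<in> I"
      then obtain N where N: "N \<in> B" "S - C \<subseteq> N" "\<tau> N = 0" using neg unfolding negligible_wrt_def by blast
      have "(L - C) \<inter> S \<in> B" using D S IB by auto
      moreover have "(L - C) \<inter> S \<subseteq> N" using N by auto
      ultimately have "\<tau> ((L - C) \<inter> S) \<le> \<tau> N" using smax_mono[OF assms(5)] N by blast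
      thus "\<tau> ((L - C) \<inter> S) \<le> 0" using N by simp
    qed simp
    hence int0: "idem_integral op E \<tau> (L - C) c = 0" using cn[OF D] by simp
    define Bs where "Bs n = (L - C) \<inter> {x\<in>E. ennreal (1 / Suc n) < c x}" for n :: nat
    have BsB: "range Bs \<subseteq> B" unfolding Bs_def using D lev by auto
    have "\<tau> (Bs n) = 0" for n
    proof -
      let ?t = "ennreal (1 / Suc n)"
      have "op ?t (\<tau> (Bs n)) \<le> idem_integral op E \<tau> (L - C) c"
        unfolding idem_integral_def Bs_def by (rule SUP_upper) auto
      hence "op ?t (\<tau> (Bs n)) = 0" using int0 by simp
      moreover have "?t \<noteq> 0" by simp
      ultimately show ?thesis using nzd by blast
    qed
    hence "\<tau> (\<Union>n. Bs n) = 0" using smax_zero[OF assms(5) BsB] by blast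
    moreover have "(\<Union>n. Bs n) = L - C"
    proof
      show "(\<Union>n. Bs n) \<subseteq> L - C" unfolding Bs_def by auto
      show "L - C \<subseteq> (\<Union>n. Bs n)"
      proof
        fix x assume x: "x \<in> L - C"
        hence cx: "0 < c x" "x \<in> E" unfolding L_def by auto
        obtain n :: nat where "ennreal (1 / Suc n) < c x"
        proof (cases "c x = top")
          case True thus ?thesis using that[of 0] by simp
        next
          case False
          then obtain r where r: "c x = ennreal r" "r > 0" using cx(1)
            by (cases "c x") (auto simp: ennreal_less_zero_iff)
          obtain n :: nat where "1 / Suc n < r" using r(2)
            by (metis nat_approx_posE)
          thus ?thesis using that[of n] r by (simp add: ennreal_lessI)
        qed
        thus "x \<in> (\<Union>n. Bs n)" unfolding Bs_def using x cx by blast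
      qed
    qed
    ultimately show "negligible_wrt B \<tau> (L - C)" unfolding negligible_wrt_def using D by auto
  qed
qed

end
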